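(* Let $\mathfrak{C}\subset(\mathbb{C}\setminus\{0\})^2\times\mathbb{C}$ be the hypersurface in coordinates $(s,u,c)$ defined by $$0=(s-s^{-1})(u-u^{-1})+c\,(s^{-2}u^{-2}-u^{-2}-s^{-2}+4-s^2-u^2+s^2u^2)+c^2(2s^{-1}u^{-1}-su^{-1}-s^{-1}u+2su)+c^3,$$ let $e:\mathfrak{C}\to(\mathbb{C}\setminus\{0\})^4$, $e(s,u,c)=(s,t,u,v)$ with $$t=s^{-2}-s^{-2}u^2+u^2+c\,(2s^{-1}u+s^{-3}u^{-1}-s^{-3}u)+c^2s^{-2},\qquad v=u^{-2}-u^{-2}s^2+s^2+c\,(2u^{-1}s+u^{-3}s^{-1}-u^{-3}s)+c^2u^{-2},$$ and let $\mathfrak{E}_0$ be the Zariski closure of $e(\mathfrak{C})$. Let $\overline{\mathfrak{C}}\subset(\mathbb{C}\setminus\{0\})^2\times\mathbb{C}$ be the hypersurface in coordinates $(\bar s,\bar u,d)$ defined by $$0=\bar s\bar u(\bar s-1)(\bar u-1)+d\,(1-\bar s-\bar u+4\bar s\bar u-\bar s^2\bar u-\bar s\bar u^2+\bar s^2\bar u^2)+d^2(2-\bar s-\bar u+2\bar s\bar u)+d^3,$$ let $\bar e:\overline{\mathfrak{C}}\to(\mathbb{C}\setminus\{0\})^4$, $\bar e(\bar s,\bar u,d)=(\bar s,\bar t,\bar u,\bar v)$ with $$\bar t=\bar s^{-1}-\bar s^{-1}\bar u+\bar u+d\,(2\bar s^{-1}+\bar s^{-2}\bar u^{-1}-\bar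 s^{-2})+d^2\bar s^{-2}\bar u^{-1},\qquad \bar v=\bar u^{-1}-\bar u^{-1}\bar s+\bar s+d\,(2\bar u^{-1}+\bar u^{-2}\bar s^{-1}-\bar u^{-2})+d^2\bar u^{-2}\bar s^{-1},$$ and let $\overline{\mathfrak{E}}_0$ be the Zariski closure of $\bar e(\overline{\mathfrak{C}})$. Then $\mathfrak{C}$ and $\mathfrak{E}_0$ are birationally equivalent, and $\overline{\mathfrak{C}}$ and $\overline{\mathfrak{E}}_0$ are birationally equivalent.
   Context: Here $W$ is the complement of the right-handed Whitehead link, with $\pi_1(W)=\langle\mathcal{M}_0,\mathcal{M}_1\mid \mathcal{M}_1\mathcal{M}_0\mathcal{M}_1\mathcal{M}_0^{-1}\mathcal{M}_1^{-1}\mathcal{M}_0^{-1}\mathcal{M}_1\mathcal{M}_0=\mathcal{M}_0\mathcal{M}_1\mathcal{M}_0^{-1}\mathcal{M}_1^{-1}\mathcal{M}_0^{-1}\mathcal{M}_1\mathcal{M}_0\mathcal{M}_1\rangle$. $\mathfrak{C}$ is the (irreducible) variety of representations $\rho(\mathcal{M}_0)=\begin{pmatrix}s&c\\0&s^{-1}\end{pmatrix}$, $\rho(\mathcal{M}_1)=\begin{pmatrix}u&0\\1&u^{-1}\end{pmatrix}$ into $SL_2(\mathbb{C})$, and $\overline{\mathfrak{C}}$ the analogous variety of representations $\mathcal{M}_0\mapsto\begin{pmatrix}\bar s&d\\0&1\end{pmatrix}$, $\mathcal{M}_1\mapsto\begin{pmatrix}\bar u&0\\1&1\end{pmatrix}$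 into $GL_2(\mathbb{C})$ (corresponding to $PSL_2(\mathbb{C})$-representations). The maps $e,\bar e$ record the upper-left entries of the images of $\mathcal{M}_0$, $\mathcal{L}_0^t$, $\mathcal{M}_1$, $\mathcal{L}_1^t$, where $\mathcal{L}_0^t=\mathcal{M}_0^{-1}\mathcal{M}_1\mathcal{M}_0\mathcal{M}_1^{-1}\mathcal{M}_0^{-1}\mathcal{M}_1^{-1}\mathcal{M}_0\mathcal{M}_1$ and $\mathcal{L}_1^t=\mathcal{M}_1^{-1}\mathcal{M}_0\mathcal{M}_1\mathcal{M}_0^{-1}\mathcal{M}_1^{-1}\mathcal{M}_0^{-1}\mathcal{M}_1\mathcal{M}_0$ are the null-homologous longitudes; $\mathfrak{E}_0$ and $\overline{\mathfrak{E}}_0$ are the components of the $SL_2(\mathbb{C})$- and $PSL_2(\mathbb{C})$-eigenvalue varieties of $W$ corresponding to the Dehn surgery component. *)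

theory Defs
  imports "HOL-Analysis.Analysis"
begin

inductive polyfun :: "(complex^'n \<Rightarrow> complex) \<Rightarrow> bool" where
  pf_const: "polyfun (\<lambda>x. c)"
| pf_coord: "polyfun (\<lambda>x. x $ i)"
| pf_add: "polyfun f \<Longrightarrow> polyfun g \<Longrightarrow> polyfun (\<lambda>x. f x + g x)"
| pf_mult: "polyfun f \<Longrightarrow> polyfun g \<Longrightarrow> polyfun (\<lambda>x. f x * g x)"

definition zariski_closed :: "(complex^'n) set \<Rightarrow> bool" where
  "zariski_closed S \<longleftrightarrow> (\<exists>F. (\<forall>f\<in>F. polyfun f) \<and> S = {x. \<forall>f\<in>F. f x = 0})"

definition zariski_closure :: "(complex^'n) set \<Rightarrow> (complex^'n) set" where
  "zariski_closure A = \<Inter>{S. zariski_closed S \<and> A \<subseteq> S}"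

definition open_dense_in :: "(complex^'n) set \<Rightarrow> (complex^'n) set \<Rightarrow> bool" where
  "open_dense_in U X \<longleftrightarrow> U \<subseteq> X \<and> (\<exists>S. zariski_closed S \<and> U = X - S) \<and> X \<subseteq> zariski_closure U"

definition rational_on :: "(complex^'m \<Rightarrow> complex^'n) \<Rightarrow> (complex^'m) set \<Rightarrow> bool" where
  "rational_on f U \<longleftrightarrow> (\<exists>P Q. (\<forall>i. polyfun (P i) \<and> polyfun (Q i)) \<and>
      (\<forall>x\<in>U. \<forall>i. Q i x \<noteq> 0 \<and> f x $ i = P i x / Q i x))"

definition birationally_equivalent :: "(complex^'m) set \<Rightarrow> (complex^'n) set \<Rightarrow> bool" where
  "birationally_equivalent X Y \<longleftrightarrow>
     (\<exists>U V f g. open_dense_in U X \<and> open_dense_in V Y \<and>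
        rational_on f U \<and> rational_on g V \<and> f ` U \<subseteq> V \<and> g ` V \<subseteq> U \<and>
        (\<forall>x\<in>U. g (f x) = x) \<and> (\<forall>y\<in>V. f (g y) = y))"

definition torus4 :: "(complex^4) set" where
  "torus4 = {x. \<forall>i. x $ i \<noteq> 0}"

definition C_eq :: "complex \<Rightarrow> complex \<Rightarrow> complex \<Rightarrow> complex" where
  "C_eq s u c = (s - 1/s) * (u - 1/u)
       + c * (1/(s^2 * u^2) - 1/u^2 - 1/s^2 + 4 - s^2 - u^2 + s^2 * u^2)
       + c^2 * (2/(s * u) - s/u - u/s + 2 * s * u) + c^3"

definition Cfrak :: "(complex^3) set" where
  "Cfrak = {p. p$1 \<noteq> 0 \<and> p$2 \<noteq> 0 \<and> C_eq (p$1) (p$2) (p$3) = 0}"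

definition e_map :: "complex^3 \<Rightarrow> complex^4" where
  "e_map p = (let s = p$1; u = p$2; c = p$3;
     t = 1/s^2 - u^2/s^2 + u^2 + c * (2 * u/s + 1/(s^3 * u) - u/s^3) + c^2/s^2;
     v = 1/u^2 - s^2/u^2 + s^2 + c * (2 * s/u + 1/(u^3 * s) - s/u^3) + c^2/u^2
   in vector [s, t, u, v])"

definition E0 :: "(complex^4) set" where
  "E0 = zariski_closure (e_map ` Cfrak) \<inter> torus4"

definition Cbar_eq :: "complex \<Rightarrow> complex \<Rightarrow> complex \<Rightarrow> complex" where
  "Cbar_eq s u d = s * u * (s - 1) * (u - 1)
       + d * (1 - s - u + 4 * s * u - s^2 * u - s * u^2 + s^2 * u^2)
       + d^2 * (2 - s - u + 2 * s * u) + d^3"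

definition Cbar :: "(complex^3) set" where
  "Cbar = {p. p$1 \<noteq> 0 \<and> p$2 \<noteq> 0 \<and> Cbar_eq (p$1) (p$2) (p$3) = 0}"

definition ebar_map :: "complex^3 \<Rightarrow> complex^4" where
  "ebar_map p = (let s = p$1; u = p$2; d = p$3;
     t = 1/s - u/s + u + d * (2/s + 1/(s^2 * u) - 1/s^2) + d^2/(s^2 * u);
     v = 1/u - s/u + s + d * (2/u + 1/(u^2 * s) - 1/u^2) + d^2/(u^2 * s)
   in vector [s, t, u, v])"

definition E0bar :: "(complex^4) set" where
  "E0bar = zariski_closure (ebar_map ` Cbar) \<inter> torus4"

end

theory Submission
  imports Defs "HOL-Computational_Algebra.Fundamental_Theorem_Algebra"
begin

lemma poly_root_exists3:
  fixes a b d :: complex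
  shows "\<exists>r. r^3 + a*r^2 + b*r + d = 0"
proof -
  have "\<not> constant (poly [:d,b,a,1:])"
    by (simp add: constant_degree)
  then obtain r where "poly [:d,b,a,1:] r = 0"
    using fundamental_theorem_of_algebra by blast
  then have "r^3 + a*r^2 + b*r + d = 0"
    by (simp add: algebra_simps power2_eq_square power3_eq_cube)
  then show ?thesis by blast
qed

lemma poly_root_exists2:
  fixes a b :: complex
  shows "\<exists>r. r^2 + a*r + b = 0"
proof -
  have "\<not> constant (poly [:b,a,1:])"
    by (simp add: constant_degree)
  then obtain r where "poly [:b,a,1:] r = 0"
    using fundamental_theorem_of_algebra by blast
  then have "r^2 + a*r + b = 0"
    by (simp add: algebra_simps power2_eq_square)
  then show ?thesis by blast
qed

lemma cubic_factor:
  fixes a b d :: complex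
  shows "\<exists>r1 r2 r3. \<forall>c. c^3 + a*c^2 + b*c + d = (c-r1)*(c-r2)*(c-r3)"
proof -
  obtain r1 where h1: "r1^3 + a*r1^2 + b*r1 + d = 0" using poly_root_exists3 by blast
  obtain r2 where h2: "r2^2 + (a+r1)*r2 + (b + a*r1 + r1^2) = 0" using poly_root_exists2 by blast
  define r3 where "r3 = -(a+r1) - r2"
  have e1: "d = -(r1^3 + a*r1^2 + b*r1)" using h1 by (simp add: algebra_simps eq_neg_iff_add_eq_0)
  have e2: "b = -(r2^2 + (a+r1)*r2 + a*r1 + r1^2)" using h2 by (simp add: algebra_simps eq_neg_iff_add_eq_0)
  have "\<forall>c. c^3 + a*c^2 + b*c + d = (c-r1)*(c-r2)*(c-r3)"
    unfolding e1 e2 r3_def by (auto simp: algebra_simps power2_eq_square power3_eq_cube)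
  then show ?thesis by blast
qed

lemma cubic_near_root:
  fixes a b d c0 :: complex
  shows "\<exists>r. r^3 + a*r^2 + b*r + d = 0 \<and> norm (r - c0)^3 \<le> norm (c0^3 + a*c0^2 + b*c0 + d)"
proof -
  obtain r1 r2 r3 where f: "\<And>c. c^3 + a*c^2 + b*c + d = (c-r1)*(c-r2)*(c-r3)"
    using cubic_factor by blast
  define n1 where "n1 = norm (r1 - c0)"
  define n2 where "n2 = norm (r2 - c0)"
  define n3 where "n3 = norm (r3 - c0)"
  have q: "norm (c0^3 + a*c0^2 + b*c0 + d) = n1*n2*n3"
    unfolding f n1_def n2_def n3_def by (simp add: norm_mult norm_minus_commute)
  have nn: "n1 \<ge> 0" "n2 \<ge> 0" "n3 \<ge> 0" unfolding n1_def n2_def n3_def by auto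
  have z: "\<And>i. i \<in> {r1,r2,r3} \<Longrightarrow> i^3 + a*i^2 + b*i + d = 0" unfolding f by auto
  have key: "x^3 \<le> n1*n2*n3" if "x \<le> n1" "x \<le> n2" "x \<le> n3" "x \<ge> 0" for x :: real
  proof -
    have "x*x \<le> n1*n2" using that nn by (intro mult_mono) auto
    then have "x*x*x \<le> n1*n2*n3" using that nn by (intro mult_mono) auto
    then show ?thesis by (simp add: power3_eq_cube)
  qed
  show ?thesis
  proof (cases "n1 \<le> n2 \<and> n1 \<le> n3")
    case True
    then show ?thesis using key[of n1] nn z q n1_def by (intro exI[of _ r1]) auto
  next
    case False
    show ?thesis
    proof (cases "n2 \<le> n3")
      case True
      then show ?thesis using False key[of n2] nn z q n2_def by (intro exI[of _ r2]) auto
    next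
      case F2: False
      then show ?thesis using False key[of n3] nn z q n3_def by (intro exI[of _ r3]) auto
    qed
  qed
qed

lemma root_path:
  fixes a b d :: "complex \<Rightarrow> complex"
  assumes la: "(a \<longlongrightarrow> a0) (at 0)" and lb: "(b \<longlongrightarrow> b0) (at 0)"
    and ld: "(d \<longlongrightarrow> d0) (at 0)"
    and r0: "c0^3 + a0*c0^2 + b0*c0 + d0 = 0"
  shows "\<exists>R. (R \<longlongrightarrow> c0) (at 0) \<and> (\<forall>z. R z^3 + a z * R z^2 + b z * R z + d z = 0)"
proof -
  define q where "q z = c0^3 + a z*c0^2 + b z*c0 + d z" for z
  define R where "R z = (SOME r. r^3 + a z*r^2 + b z*r + d z = 0 \<and> norm (r - c0)^3 \<le> norm (q z))" for z
  have R: "R z^3 + a z*R z^2 + b z*R z + d z = 0 \<and> norm (R z - c0)^3 \<le> norm (q z)" for z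
    unfolding R_def q_def by (rule someI_ex) (rule cubic_near_root)
  have "(q \<longlongrightarrow> c0^3 + a0*c0^2 + b0*c0 + d0) (at 0)"
    unfolding q_def by (intro tendsto_intros la lb ld)
  then have q0: "(q \<longlongrightarrow> 0) (at 0)" using r0 by simp
  have g0: "((\<lambda>z. root 3 (norm (q z))) \<longlongrightarrow> 0) (at 0)"
    using tendsto_real_root[OF tendsto_norm[OF q0], of 3] by simp
  have le: "norm (R z - c0) \<le> root 3 (norm (q z))" for z
  proof -
    have "norm (R z - c0) = root 3 (norm (R z - c0)^3)"
      by (simp add: real_root_pos2)
    also have "\<dots> \<le> root 3 (norm (q z))"
      using R[of z] by (subst real_root_le_iff) auto
    finally show ?thesis .
  qed
  have "((\<lambda>z. R z - c0) \<longlongrightarrow> 0) (at 0)"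
    by (rule Lim_null_comparison[OF _ g0]) (simp add: le)
  then have "((\<lambda>z. R z - c0 + c0) \<longlongrightarrow> 0 + c0) (at 0)"
    by (intro tendsto_intros)
  then have "(R \<longlongrightarrow> c0) (at 0)" by simp
  then show ?thesis using R by blast
qed

section \<open>Zariski infrastructure\<close>

lemma polyfun_cont: "polyfun f \<Longrightarrow> continuous_on UNIV f"
proof (induction rule: polyfun.induct)
  case (pf_const c) then show ?case by (rule continuous_on_const)
next
  case (pf_coord i) then show ?case by (intro continuous_on_component continuous_on_id)
next
  case (pf_add f g) then show ?case by (auto intro: continuous_on_add)
next
  case (pf_mult f g) then show ?case by (auto intro: continuous_on_mult)
qed

lemma polyfun_diff: "polyfun f \<Longrightarrow> polyfun g \<Longrightarrow> polyfun (\<lambda>x. f x - g x)"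
proof -
  assume "polyfun f" "polyfun g"
  then have "polyfun (\<lambda>x. f x + (\<lambda>x. -1) x * g x)"
    by (intro pf_add pf_mult pf_const)
  then show ?thesis by simp
qed

lemma polyfun_pow: "polyfun f \<Longrightarrow> polyfun (\<lambda>x. f x ^ n)"
proof (induction n)
  case 0 then show ?case using pf_const[of 1] by simp
next
  case (Suc n) then show ?case using pf_mult[OF Suc.prems Suc.IH] by simp
qed

lemmas polyfun_rules = pf_add pf_mult polyfun_diff polyfun_pow pf_coord pf_const

lemma zc_polyset: "polyfun f \<Longrightarrow> zariski_closed {x. f x = 0}"
  unfolding zariski_closed_def by (rule exI[of _ "{f}"]) auto

lemma subset_zc: "A \<subseteq> zariski_closure A"
  unfolding zariski_closure_def by auto

lemma zc_vanish:
  assumes "polyfun f" "\<forall>x\<in>A. f x = 0" "y \<in> zariski_closure A"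
  shows "f y = 0"
  using assms zc_polyset[OF assms(1)] unfolding zariski_closure_def by auto

lemma zc_closed: "zariski_closed (zariski_closure A)"
proof -
  define F where "F = {f. polyfun f \<and> (\<forall>x\<in>A. f x = 0)}"
  have "zariski_closure A = {x. \<forall>f\<in>F. f x = 0}"
  proof
    show "zariski_closure A \<subseteq> {x. \<forall>f\<in>F. f x = 0}"
      using zc_vanish unfolding F_def by blast
    show "{x. \<forall>f\<in>F. f x = 0} \<subseteq> zariski_closure A"
    proof (clarify, unfold zariski_closure_def, clarify)
      fix x S assume x: "\<forall>f\<in>F. f x = 0" and S: "zariski_closed S" "A \<subseteq> S"
      then obtain G where G: "\<forall>g\<in>G. polyfun g" "S = {x. \<forall>g\<in>G. g x = 0}"
        unfolding zariski_closed_def by blast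
      have "G \<subseteq> F" using G S unfolding F_def by blast
      then show "x \<in> S" using x G by blast
    qed
  qed
  then show ?thesis unfolding zariski_closed_def by (intro exI[of _ F]) (simp add: F_def)
qed

lemma zc_min: "zariski_closed S \<Longrightarrow> A \<subseteq> S \<Longrightarrow> zariski_closure A \<subseteq> S"
  unfolding zariski_closure_def by auto

lemma zc_mono: "A \<subseteq> B \<Longrightarrow> zariski_closure A \<subseteq> zariski_closure B"
  by (meson order_trans subset_zc zc_closed zc_min)

lemma path_in_zc:
  fixes P :: "complex \<Rightarrow> complex^'n"
  assumes "(P \<longlongrightarrow> x) (at 0)" "eventually (\<lambda>z. P z \<in> A) (at 0)"
  shows "x \<in> zariski_closure A"
  unfolding zariski_closure_def
proof (clarify)
  fix S assume "zariski_closed S" "A \<subseteq> S"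
  then obtain F where F: "\<forall>f\<in>F. polyfun f" "S = {x. \<forall>f\<in>F. f x = 0}"
    unfolding zariski_closed_def by blast
  have "f x = 0" if "f \<in> F" for f
  proof -
    have c: "continuous_on UNIV f" using F that polyfun_cont by blast
    have "((\<lambda>z. f (P z)) \<longlongrightarrow> f x) (at 0)"
      using continuous_on_tendsto_compose[OF c assms(1)] by simp
    moreover have "eventually (\<lambda>z. f (P z) = 0) (at 0)"
      using assms(2) by eventually_elim (use \<open>A \<subseteq> S\<close> F that in auto)
    then have "((\<lambda>z. f (P z)) \<longlongrightarrow> 0) (at 0)"
      by (rule tendsto_eventually)
    ultimately show ?thesis using tendsto_unique[OF trivial_limit_at] by blast
  qed
  then show "x \<in> S" using F by blast
qed

lemma zc_empty: "zariski_closed {}"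
  unfolding zariski_closed_def by (rule exI[of _ "{\<lambda>x. 1}"]) (auto intro: pf_const)

lemma birat_generic:
  fixes X :: "(complex^3) set" and e :: "complex^3 \<Rightarrow> complex^4" and g :: "complex^4 \<Rightarrow> complex^3"
    and Du :: "complex^3 \<Rightarrow> complex" and Dv :: "complex^4 \<Rightarrow> complex"
  defines "E \<equiv> zariski_closure (e ` X) \<inter> torus4"
  assumes pDu: "polyfun Du" and pDv: "polyfun Dv"
    and path: "\<And>x. x \<in> X \<Longrightarrow> \<exists>P. (P \<longlongrightarrow> x) (at (0::complex)) \<and> eventually (\<lambda>z. P z \<in> X \<and> Du (P z) \<noteq> 0) (at 0)"
    and cont: "\<And>x. x \<in> X \<Longrightarrow> isCont e x"
    and rat_e: "rational_on e (X - {x. Du x = 0})"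
    and rat_g: "rational_on g (E - {y. Dv y = 0})"
    and e_torus: "\<And>x. x \<in> X \<Longrightarrow> e x \<in> torus4"
    and Dv_e: "\<And>x. x \<in> X \<Longrightarrow> Du x \<noteq> 0 \<Longrightarrow> Dv (e x) \<noteq> 0"
    and ge: "\<And>x. x \<in> X \<Longrightarrow> Du x \<noteq> 0 \<Longrightarrow> g (e x) = x"
    and eg: "\<And>y. y \<in> E \<Longrightarrow> Dv y \<noteq> 0 \<Longrightarrow> g y \<in> X \<and> Du (g y) \<noteq> 0 \<and> e (g y) = y"
  shows "birationally_equivalent X E"
proof -
  define U where "U = X - {x. Du x = 0}"
  define V where "V = E - {y. Dv y = 0}"
  have eU: "e ` U \<subseteq> V"
    unfolding U_def V_def E_def using subset_zc[of "e ` X"] e_torus Dv_e by auto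
  have XU: "X \<subseteq> zariski_closure U"
  proof
    fix x assume x: "x \<in> X"
    obtain P where P0: "(P \<longlongrightarrow> x) (at (0::complex)) \<and> eventually (\<lambda>z. P z \<in> X \<and> Du (P z) \<noteq> 0) (at 0)"
      using path[OF x] by (rule exE) blast
    have P: "(P \<longlongrightarrow> x) (at 0)" "eventually (\<lambda>z. P z \<in> X \<and> Du (P z) \<noteq> 0) (at 0)"
      using P0 by simp_all
    show "x \<in> zariski_closure U"
      by (rule path_in_zc[OF P(1)]) (use P(2) in \<open>auto simp: U_def elim: eventually_mono\<close>)
  qed
  have eXV: "e ` X \<subseteq> zariski_closure V"
  proof
    fix y assume "y \<in> e ` X"
    then obtain x where x: "x \<in> X" "y = e x" by blast
    obtain P where P0: "(P \<longlongrightarrow> x) (at (0::complex)) \<and> eventually (\<lambda>z. P z \<in> X \<and> Du (P z) \<noteq> 0) (at 0)"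
      using path[OF x(1)] by (rule exE) blast
    have P: "(P \<longlongrightarrow> x) (at 0)" "eventually (\<lambda>z. P z \<in> X \<and> Du (P z) \<noteq> 0) (at 0)"
      using P0 by simp_all
    have "((\<lambda>z. e (P z)) \<longlongrightarrow> e x) (at 0)"
      using isCont_tendsto_compose[OF cont[OF x(1)] P(1)] .
    moreover have "eventually (\<lambda>z. e (P z) \<in> V) (at 0)"
      using P(2) by eventually_elim (use eU in \<open>auto simp: U_def\<close>)
    ultimately show "y \<in> zariski_closure V"
      using path_in_zc x(2) by blast
  qed
  have EV: "E \<subseteq> zariski_closure V"
  proof -
    have "zariski_closure (e ` X) \<subseteq> zariski_closure V"
      by (rule zc_min[OF zc_closed eXV])
    then show ?thesis unfolding E_def by blast
  qed
  have oU: "open_dense_in U X"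
    unfolding open_dense_in_def using XU zc_polyset[OF pDu] by (auto simp: U_def)
  have oV: "open_dense_in V E"
    unfolding open_dense_in_def using EV zc_polyset[OF pDv] by (auto simp: V_def)
  have gV: "g ` V \<subseteq> U" using eg unfolding U_def V_def by auto
  show ?thesis
    unfolding birationally_equivalent_def
    apply (rule exI[of _ U], rule exI[of _ V], rule exI[of _ e], rule exI[of _ g])
    using oU oV rat_e rat_g eU gV ge eg unfolding U_def V_def by auto
qed


lemma ev_neq: "eventually (\<lambda>z::complex. z \<noteq> b) (at 0)"
proof (cases "b = 0")
  case True then show ?thesis by (simp add: eventually_at_filter)
next
  case False
  then have "eventually (\<lambda>z::complex. z \<noteq> b) (nhds 0)" by (intro t1_space_nhds) auto
  then show ?thesis by (simp add: eventually_at_filter eventually_mono)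
qed

lemma vector_4 [simp]:
 "(vector [x,y,z,w] ::('a::zero)^4)$1 = x"
 "(vector [x,y,z,w] ::('a::zero)^4)$2 = y"
 "(vector [x,y,z,w] ::('a::zero)^4)$3 = z"
 "(vector [x,y,z,w] ::('a::zero)^4)$4 = w"
  unfolding vector_def by simp_all


section \<open>The first variety\<close>

definition tC :: "complex \<Rightarrow> complex \<Rightarrow> complex \<Rightarrow> complex" where
  "tC s u c = 1/s^2 - u^2/s^2 + u^2 + c * (2 * u/s + 1/(s^3 * u) - u/s^3) + c^2/s^2"
definition vC :: "complex \<Rightarrow> complex \<Rightarrow> complex \<Rightarrow> complex" where
  "vC s u c = 1/u^2 - s^2/u^2 + s^2 + c * (2 * s/u + 1/(u^3 * s) - s/u^3) + c^2/u^2"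

lemma e_map_simps:
  "e_map p $ 1 = p$1" "e_map p $ 2 = tC (p$1) (p$2) (p$3)"
  "e_map p $ 3 = p$2" "e_map p $ 4 = vC (p$1) (p$2) (p$3)"
  unfolding e_map_def Let_def tC_def vC_def by simp_all

lemma tC_poly: "s \<noteq> 0 \<Longrightarrow> u \<noteq> 0 \<Longrightarrow> tC s u c * (s^3*u) =
   s*u - s*u^3 + s^3*u^3 + c*(2* s^2*u^2 + 1 - u^2) + c^2* s*u"
  unfolding tC_def by (simp add: field_simps) algebra

lemma vC_poly: "s \<noteq> 0 \<Longrightarrow> u \<noteq> 0 \<Longrightarrow> vC s u c * (u^3* s) =
   u* s - u* s^3 + u^3* s^3 + c*(2*u^2* s^2 + 1 - s^2) + c^2*u* s"
  unfolding vC_def by (simp add: field_simps) algebra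

lemma C_poly: "s \<noteq> 0 \<Longrightarrow> u \<noteq> 0 \<Longrightarrow> C_eq s u c * (s^2*u^2) =
   (s^2-1)*(u^2-1)* s*u + c*(1 - s^2 - u^2 + 4* s^2*u^2 - s^4*u^2 - s^2*u^4 + s^4*u^4)
   + c^2*(2* s*u - s^3*u - s*u^3 + 2* s^3*u^3) + c^3* s^2*u^2"
  unfolding C_eq_def by (simp add: field_simps) algebra

lemma tC_nz:
  assumes "s \<noteq> 0" "u \<noteq> 0" "C_eq s u c = 0"
  shows "tC s u c \<noteq> 0"
proof -
  have "tC s u c * (s^3*u) * (1 + 2* s*u*c - s^2 + s^2*u^2 + s^2*u^2*c^2 - s^3*u*c + s^3*u^3*c)
     = s^3*u^3 + (1 + s*u*c + s^2*u^2) * (C_eq s u c * (s^2*u^2))"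
    unfolding tC_poly[OF assms(1,2)] C_poly[OF assms(1,2)] by algebra
  then show ?thesis using assms by auto
qed

lemma vC_nz:
  assumes "s \<noteq> 0" "u \<noteq> 0" "C_eq s u c = 0"
  shows "vC s u c \<noteq> 0"
proof -
  have "vC s u c * (u^3* s) * (1 - u^2 + 2* s*u*c - s*u^3*c + s^2*u^2 + s^2*u^2*c^2 + s^3*u^3*c)
     = s^3*u^3 + (1 + s*u*c + s^2*u^2) * (C_eq s u c * (s^2*u^2))"
    unfolding vC_poly[OF assms(1,2)] C_poly[OF assms(1,2)] by algebra
  then show ?thesis using assms by auto
qed

definition A2 :: "complex \<Rightarrow> complex \<Rightarrow> complex" where "A2 s u = 2/(s * u) - s/u - u/s + 2 * s * u"
definition A1 :: "complex \<Rightarrow> complex \<Rightarrow> complex" where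
  "A1 s u = 1/(s^2 * u^2) - 1/u^2 - 1/s^2 + 4 - s^2 - u^2 + s^2 * u^2"
definition A0 :: "complex \<Rightarrow> complex \<Rightarrow> complex" where "A0 s u = (s - 1/s) * (u - 1/u)"

lemma C_eq_expand: "C_eq s u c = c^3 + A2 s u * c^2 + A1 s u * c + A0 s u"
  unfolding C_eq_def A2_def A1_def A0_def by (simp add: algebra_simps)

lemma Cfrak_path:
  assumes x: "x \<in> Cfrak"
  shows "\<exists>P. (P \<longlongrightarrow> x) (at (0::complex)) \<and>
     eventually (\<lambda>z. P z \<in> Cfrak \<and> (P z $ 1)^2 - (P z $ 2)^2 \<noteq> 0) (at 0)"
proof -
  define s0 where "s0 = x$1"
  define u0 where "u0 = x$2"
  define c0 where "c0 = x$3"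
  have s0: "s0 \<noteq> 0" and u0: "u0 \<noteq> 0" and r0: "C_eq s0 u0 c0 = 0"
    using x unfolding Cfrak_def s0_def u0_def c0_def by auto
  have lim_s: "((\<lambda>z. s0 + z) \<longlongrightarrow> s0) (at 0)"
    using tendsto_add[OF tendsto_const[of s0] tendsto_ident_at[of 0 UNIV]] by simp
  have "\<exists>R. (R \<longlongrightarrow> c0) (at 0) \<and> (\<forall>z. R z^3 + A2 (s0+z) u0 * R z^2 + A1 (s0+z) u0 * R z + A0 (s0+z) u0 = 0)"
  proof (rule root_path)
    show "((\<lambda>z. A2 (s0+z) u0) \<longlongrightarrow> A2 s0 u0) (at 0)"
      unfolding A2_def using s0 u0 by (intro tendsto_intros lim_s) auto
    show "((\<lambda>z. A1 (s0+z) u0) \<longlongrightarrow> A1 s0 u0) (at 0)"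
      unfolding A1_def using s0 u0 by (intro tendsto_intros lim_s) auto
    show "((\<lambda>z. A0 (s0+z) u0) \<longlongrightarrow> A0 s0 u0) (at 0)"
      unfolding A0_def using s0 u0 by (intro tendsto_intros lim_s) auto
    show "c0^3 + A2 s0 u0 * c0^2 + A1 s0 u0 * c0 + A0 s0 u0 = 0"
      using r0 by (simp add: C_eq_expand)
  qed
  then obtain R where R: "(R \<longlongrightarrow> c0) (at 0)"
    "\<And>z. R z^3 + A2 (s0+z) u0 * R z^2 + A1 (s0+z) u0 * R z + A0 (s0+z) u0 = 0" by blast
  define P where "P z = (vector [s0 + z, u0, R z] :: complex^3)" for z
  have "(P \<longlongrightarrow> x) (at 0)"
  proof (rule vec_tendstoI)
    fix i :: 3
    consider "i = 1" | "i = 2" | "i = 3" using exhaust_3 by blast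
    then show "((\<lambda>z. P z $ i) \<longlongrightarrow> x $ i) (at 0)"
      by cases (auto simp: P_def s0_def [symmetric] u0_def [symmetric] c0_def [symmetric] lim_s R(1))
  qed
  moreover have "eventually (\<lambda>z. P z \<in> Cfrak \<and> (P z $ 1)^2 - (P z $ 2)^2 \<noteq> 0) (at 0)"
    using ev_neq[of "-s0"] ev_neq[of "u0 - s0"] ev_neq[of "-u0-s0"]
  proof eventually_elim
    case (elim z)
    have "s0 + z \<noteq> 0" using elim(1) by (auto simp: add_eq_0_iff)
    moreover have "C_eq (s0+z) u0 (R z) = 0" using R(2)[of z] by (simp add: C_eq_expand)
    moreover have "(s0+z)^2 - u0^2 \<noteq> 0"
    proof
      assume "(s0+z)^2 - u0^2 = 0"
      then show False using elim(2,3) by algebra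
    qed
    ultimately show ?case using u0 by (simp add: P_def Cfrak_def)
  qed
  ultimately show ?thesis by blast
qed

definition DvC :: "complex^4 \<Rightarrow> complex" where "DvC y = (y$1)^2 - (y$3)^2"
definition NC :: "complex^4 \<Rightarrow> complex" where
  "NC y = y$1 * y$3 * (y$2 * (y$1)^2 - y$4 * (y$3)^2 - DvC y)"
definition gC :: "complex^4 \<Rightarrow> complex^3" where
  "gC y = vector [y$1, y$3, NC y / DvC y]"
definition P1C :: "complex^4 \<Rightarrow> complex" where
  "P1C y = (let s = y$1; t = y$2; u = y$3; v = y$4; D = DvC y; N = NC y in
     D^2 * (t * s^3 * u - s * u + s * u^3 - s^3 * u^3) - N * D * (2 * s^2 * u^2 + 1 - u^2) - N^2 * s * u)"
definition P2C :: "complex^4 \<Rightarrow> complex" where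
  "P2C y = (let s = y$1; t = y$2; u = y$3; v = y$4; D = DvC y; N = NC y in
     D^2 * (v * u^3 * s - u * s + u * s^3 - u^3 * s^3) - N * D * (2 * u^2 * s^2 + 1 - s^2) - N^2 * u * s)"
definition P3C :: "complex^4 \<Rightarrow> complex" where
  "P3C y = (let s = y$1; t = y$2; u = y$3; v = y$4; D = DvC y; N = NC y in
     D^3 * ((s^2-1) * (u^2-1) * s * u) + N * D^2 * (1 - s^2 - u^2 + 4 * s^2 * u^2 - s^4 * u^2 - s^2 * u^4 + s^4 * u^4)
   + N^2 * D * (2 * s * u - s^3 * u - s * u^3 + 2 * s^3 * u^3) + N^3 * s^2 * u^2)"

lemma polyfun_DvC: "polyfun DvC" unfolding DvC_def by (intro polyfun_rules)
lemma polyfun_NC: "polyfun NC" unfolding NC_def DvC_def by (intro polyfun_rules)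
lemma polyfun_P1C: "polyfun P1C" unfolding P1C_def NC_def DvC_def Let_def by (intro polyfun_rules)
lemma polyfun_P2C: "polyfun P2C" unfolding P2C_def NC_def DvC_def Let_def by (intro polyfun_rules)
lemma polyfun_P3C: "polyfun P3C" unfolding P3C_def NC_def DvC_def Let_def by (intro polyfun_rules)

lemma NC_e:
  assumes "p$1 \<noteq> 0" "p$2 \<noteq> 0"
  shows "NC (e_map p) = p$3 * DvC (e_map p)"
  using assms unfolding NC_def DvC_def e_map_simps tC_def vC_def
  by (simp add: field_simps) algebra

lemma P_e_vanish:
  assumes "p \<in> Cfrak"
  shows "P1C (e_map p) = 0" "P2C (e_map p) = 0" "P3C (e_map p) = 0"
proof -
  define s u c where "s = p$1" and "u = p$2" and "c = p$3"
  have nz: "s \<noteq> 0" "u \<noteq> 0" and ce: "C_eq s u c = 0" using assms unfolding Cfrak_def s_def u_def c_def by auto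
  have N: "NC (e_map p) = c * (s^2 - u^2)"
    using NC_e[of p] nz unfolding s_def u_def c_def DvC_def e_map_simps by simp
  have D: "DvC (e_map p) = s^2 - u^2" unfolding DvC_def e_map_simps s_def u_def ..
  have T: "tC s u c * s^3 * u = s * u - s * u^3 + s^3 * u^3 + c * (2 * s^2 * u^2 + 1 - u^2) + c^2 * s * u"
    using tC_poly[OF nz, of c] by (simp add: mult.assoc)
  have V: "vC s u c * u^3 * s = u * s - u * s^3 + u^3 * s^3 + c * (2 * u^2 * s^2 + 1 - s^2) + c^2 * u * s"
    using vC_poly[OF nz, of c] by (simp add: mult.assoc)
  have CC: "(s^2-1) * (u^2-1) * s * u + c * (1 - s^2 - u^2 + 4 * s^2 * u^2 - s^4 * u^2 - s^2 * u^4 + s^4 * u^4)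
   + c^2 * (2 * s * u - s^3 * u - s * u^3 + 2 * s^3 * u^3) + c^3 * s^2 * u^2 = 0"
    using C_poly[OF nz, of c] ce by simp
  show "P1C (e_map p) = 0"
    unfolding P1C_def Let_def N D e_map_simps s_def[symmetric] u_def[symmetric] c_def[symmetric] T
    by (simp add: algebra_simps power2_eq_square power3_eq_cube)
  show "P2C (e_map p) = 0"
    unfolding P2C_def Let_def N D e_map_simps s_def[symmetric] u_def[symmetric] c_def[symmetric] V
    by (simp add: algebra_simps power2_eq_square power3_eq_cube)
  have "P3C (e_map p) = (s^2 - u^2)^3 * ((s^2-1) * (u^2-1) * s * u + c * (1 - s^2 - u^2 + 4 * s^2 * u^2 - s^4 * u^2 - s^2 * u^4 + s^4 * u^4)
   + c^2 * (2 * s * u - s^3 * u - s * u^3 + 2 * s^3 * u^3) + c^3 * s^2 * u^2)"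
    unfolding P3C_def Let_def N D e_map_simps s_def[symmetric] u_def[symmetric] c_def[symmetric]
    by (simp add: algebra_simps power2_eq_square power3_eq_cube)
  then show "P3C (e_map p) = 0" using CC by simp
qed

lemma E0_inv:
  assumes y: "y \<in> zariski_closure (e_map ` Cfrak) \<inter> torus4" and D: "DvC y \<noteq> 0"
  shows "gC y \<in> Cfrak \<and> (gC y $ 1)^2 - (gC y $ 2)^2 \<noteq> 0 \<and> e_map (gC y) = y"
proof -
  have yc: "y \<in> zariski_closure (e_map ` Cfrak)" and yt: "y \<in> torus4" using y by auto
  have p1: "P1C y = 0" by (rule zc_vanish[OF polyfun_P1C _ yc]) (auto simp: P_e_vanish)
  have p2: "P2C y = 0" by (rule zc_vanish[OF polyfun_P2C _ yc]) (auto simp: P_e_vanish)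
  have p3: "P3C y = 0" by (rule zc_vanish[OF polyfun_P3C _ yc]) (auto simp: P_e_vanish)
  define s t u v where "s = y$1" and "t = y$2" and "u = y$3" and "v = y$4"
  define c where "c = NC y / DvC y"
  have nz: "s \<noteq> 0" "u \<noteq> 0" using yt unfolding torus4_def s_def u_def by auto
  have Dd: "DvC y = s^2 - u^2" unfolding DvC_def s_def u_def ..
  have N: "NC y = c * (s^2 - u^2)" using D unfolding c_def Dd by simp
  have D2: "s^2 - u^2 \<noteq> 0" using D Dd by simp
  have "(s^2 - u^2)^2 * (t * s^3 * u - (s * u - s * u^3 + s^3 * u^3 + c * (2 * s^2 * u^2 + 1 - u^2) + c^2 * s * u)) = 0"
    using p1 unfolding P1C_def Let_def N Dd s_def[symmetric] t_def[symmetric] u_def[symmetric]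
    by (simp add: algebra_simps power2_eq_square power3_eq_cube)
  then have "t * s^3 * u = tC s u c * s^3 * u"
    using D2 tC_poly[OF nz, of c] by (simp add: mult.assoc)
  then have tt: "tC s u c = t" using nz by simp
  have "(s^2 - u^2)^2 * (v * u^3 * s - (u * s - u * s^3 + u^3 * s^3 + c * (2 * u^2 * s^2 + 1 - s^2) + c^2 * u * s)) = 0"
    using p2 unfolding P2C_def Let_def N Dd s_def[symmetric] v_def[symmetric] u_def[symmetric]
    by (simp add: algebra_simps power2_eq_square power3_eq_cube)
  then have "v * u^3 * s = vC s u c * u^3 * s"
    using D2 vC_poly[OF nz, of c] by (simp add: mult.assoc)
  then have vv: "vC s u c = v" using nz by simp
  have "(s^2 - u^2)^3 * (C_eq s u c * (s^2 * u^2)) = 0"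
    using p3 unfolding C_poly[OF nz] P3C_def Let_def N Dd s_def[symmetric] u_def[symmetric]
    by (simp add: algebra_simps power2_eq_square power3_eq_cube)
  then have ce: "C_eq s u c = 0" using D2 nz by simp
  have g: "gC y = vector [s, u, c]" unfolding gC_def s_def u_def c_def ..
  have "e_map (gC y) = y"
  proof (rule vec_eq_iff[THEN iffD2], rule allI)
    fix i :: 4
    consider "i = 1" | "i = 2" | "i = 3" | "i = 4" using exhaust_4 by blast
    then show "e_map (gC y) $ i = y $ i"
      by cases (simp_all add: g e_map_simps tt vv, simp_all add: s_def t_def u_def v_def)
  qed
  then show ?thesis using nz ce D2 by (simp add: g Cfrak_def)
qed

lemma rational_e_map: "rational_on e_map (Cfrak - {x. (x$1)^2 - (x$2)^2 = 0})"
proof -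
  define P :: "4 \<Rightarrow> complex^3 \<Rightarrow> complex" where "P i = (if i = 1 then (\<lambda>p. p$1) else if i = 2 then
     (\<lambda>p. p$1 * p$2 - p$1 * p$2^3 + p$1^3 * p$2^3 + p$3 * (2 * p$1^2 * p$2^2 + 1 - p$2^2) + p$3^2 * p$1 * p$2)
     else if i = 3 then (\<lambda>p. p$2) else
     (\<lambda>p. p$2 * p$1 - p$2 * p$1^3 + p$2^3 * p$1^3 + p$3 * (2 * p$2^2 * p$1^2 + 1 - p$1^2) + p$3^2 * p$2 * p$1))" for i
  define Q :: "4 \<Rightarrow> complex^3 \<Rightarrow> complex" where "Q i = (if i = 2 then (\<lambda>p. p$1^3 * p$2) else if i = 4 then
     (\<lambda>p. p$2^3 * p$1) else (\<lambda>p. 1))" for i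
  have pf: "\<forall>i. polyfun (P i) \<and> polyfun (Q i)"
  proof
    fix i :: 4
    show "polyfun (P i) \<and> polyfun (Q i)" unfolding P_def Q_def by (auto intro!: polyfun_rules polyfun_rules)
  qed
  have "Q i x \<noteq> 0 \<and> e_map x $ i = P i x / Q i x" if x: "x \<in> Cfrak - {x. (x$1)^2 - (x$2)^2 = 0}" for x i
  proof -
  from x have nz: "x$1 \<noteq> 0" "x$2 \<noteq> 0" unfolding Cfrak_def by auto
  consider "i = 1" | "i = 2" | "i = 3" | "i = 4" using exhaust_4 by blast
  then show "Q i x \<noteq> 0 \<and> e_map x $ i = P i x / Q i x"
  proof cases
    case 2 then show ?thesis using nz tC_poly[OF nz, of "x$3"]
      by (simp add: P_def Q_def e_map_simps eq_divide_eq)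
  next
    case 4 then show ?thesis using nz vC_poly[OF nz, of "x$3"]
      by (simp add: P_def Q_def e_map_simps eq_divide_eq)
  qed (simp_all add: P_def Q_def e_map_simps)
  qed
  then show ?thesis unfolding rational_on_def using pf by blast
qed

lemma rational_gC: "rational_on gC (Y - {y. DvC y = 0})"
proof -
  define P :: "3 \<Rightarrow> complex^4 \<Rightarrow> complex" where "P i = (if i = 1 then (\<lambda>y. y$1) else if i = 2 then
     (\<lambda>y. y$3) else NC)" for i
  define Q :: "3 \<Rightarrow> complex^4 \<Rightarrow> complex" where "Q i = (if i = 3 then DvC else (\<lambda>p. 1))" for i
  have pf: "\<forall>i. polyfun (P i) \<and> polyfun (Q i)"
  proof
    fix i :: 3
    show "polyfun (P i) \<and> polyfun (Q i)" unfolding P_def Q_def by (auto intro!: polyfun_rules polyfun_NC polyfun_rules polyfun_DvC)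
  qed
  have "Q i x \<noteq> 0 \<and> gC x $ i = P i x / Q i x" if x: "x \<in> Y - {y. DvC y = 0}" for x i
  proof -
  consider "i = 1" | "i = 2" | "i = 3" using exhaust_3 by blast
  then show "Q i x \<noteq> 0 \<and> gC x $ i = P i x / Q i x"
    by cases (use x in \<open>simp_all add: P_def Q_def gC_def\<close>)
  qed
  then show ?thesis unfolding rational_on_def using pf by blast
qed

lemma isCont_e_map: "x$1 \<noteq> 0 \<Longrightarrow> x$2 \<noteq> 0 \<Longrightarrow> isCont e_map x"
  unfolding isCont_def
proof (rule vec_tendstoI)
  fix i :: 4
  assume nz: "x$1 \<noteq> 0" "x$2 \<noteq> 0"
  have l: "((\<lambda>y. y $ j) \<longlongrightarrow> x $ j) (at x)" for j
    by (intro tendsto_vec_nth tendsto_ident_at)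
  consider "i = 1" | "i = 2" | "i = 3" | "i = 4" using exhaust_4 by blast
  then show "((\<lambda>y. e_map y $ i) \<longlongrightarrow> e_map x $ i) (at x)"
    by cases (simp_all add: e_map_simps tC_def vC_def l, (intro tendsto_intros l; use nz in simp)+)
qed

lemma e_torus: "x \<in> Cfrak \<Longrightarrow> e_map x \<in> torus4"
  unfolding torus4_def
proof (clarify)
  fix i :: 4 assume x: "x \<in> Cfrak" and z: "e_map x $ i = 0"
  then have nz: "x$1 \<noteq> 0" "x$2 \<noteq> 0" "C_eq (x$1) (x$2) (x$3) = 0" unfolding Cfrak_def by auto
  consider "i = 1" | "i = 2" | "i = 3" | "i = 4" using exhaust_4 by blast
  then show False
    by cases (use z nz tC_nz[OF nz] vC_nz[OF nz] in \<open>simp_all add: e_map_simps\<close>)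
qed

lemma first_half: "birationally_equivalent Cfrak E0"
  unfolding E0_def
proof (rule birat_generic[where Du = "\<lambda>p. (p$1)^2 - (p$2)^2" and Dv = DvC and g = gC])
  show "polyfun (\<lambda>p::complex^3. (p$1)^2 - (p$2)^2)" by (intro polyfun_rules)
  show "polyfun DvC" by (rule polyfun_DvC)
  show "\<And>x. x \<in> Cfrak \<Longrightarrow> \<exists>P. (P \<longlongrightarrow> x) (at (0::complex)) \<and> eventually (\<lambda>z. P z \<in> Cfrak \<and> (P z $ 1)^2 - (P z $ 2)^2 \<noteq> 0) (at 0)"
    by (rule Cfrak_path)
  show "\<And>x. x \<in> Cfrak \<Longrightarrow> isCont e_map x" by (rule isCont_e_map) (auto simp: Cfrak_def)
  show "rational_on e_map (Cfrak - {x. (x$1)^2 - (x$2)^2 = 0})" by (rule rational_e_map)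
  show "rational_on gC (zariski_closure (e_map ` Cfrak) \<inter> torus4 - {y. DvC y = 0})" by (rule rational_gC)
  show "\<And>x. x \<in> Cfrak \<Longrightarrow> e_map x \<in> torus4" by (rule e_torus)
  show "\<And>x. x \<in> Cfrak \<Longrightarrow> (x$1)^2 - (x$2)^2 \<noteq> 0 \<Longrightarrow> DvC (e_map x) \<noteq> 0"
    by (simp add: DvC_def e_map_simps)
  show "\<And>x. x \<in> Cfrak \<Longrightarrow> (x$1)^2 - (x$2)^2 \<noteq> 0 \<Longrightarrow> gC (e_map x) = x"
  proof -
    fix x assume x: "x \<in> Cfrak" and D: "(x$1)^2 - (x$2)^2 \<noteq> 0"
    then have nz: "x$1 \<noteq> 0" "x$2 \<noteq> 0" unfolding Cfrak_def by auto
    have "DvC (e_map x) \<noteq> 0" using D by (simp add: DvC_def e_map_simps)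
    then have "NC (e_map x) / DvC (e_map x) = x$3" using NC_e[OF nz] by simp
    then show "gC (e_map x) = x"
      unfolding gC_def vec_eq_iff forall_3 by (simp add: e_map_simps)
  qed
  show "\<And>y. y \<in> zariski_closure (e_map ` Cfrak) \<inter> torus4 \<Longrightarrow> DvC y \<noteq> 0 \<Longrightarrow>
      gC y \<in> Cfrak \<and> (gC y $ 1)^2 - (gC y $ 2)^2 \<noteq> 0 \<and> e_map (gC y) = y"
    by (rule E0_inv)
qed


section \<open>The second variety\<close>

definition tB :: "complex \<Rightarrow> complex \<Rightarrow> complex \<Rightarrow> complex" where
  "tB s u d = 1/s - u/s + u + d * (2/s + 1/(s^2 * u) - 1/s^2) + d^2/(s^2 * u)"
definition vB :: "complex \<Rightarrow> complex \<Rightarrow> complex \<Rightarrow> complex" where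
  "vB s u d = 1/u - s/u + s + d * (2/u + 1/(u^2 * s) - 1/u^2) + d^2/(u^2 * s)"

lemma ebar_map_simps:
  "ebar_map p $ 1 = p$1" "ebar_map p $ 2 = tB (p$1) (p$2) (p$3)"
  "ebar_map p $ 3 = p$2" "ebar_map p $ 4 = vB (p$1) (p$2) (p$3)"
  unfolding ebar_map_def Let_def tB_def vB_def by simp_all

lemma tB_poly: "s \<noteq> 0 \<Longrightarrow> u \<noteq> 0 \<Longrightarrow> tB s u d * (s^2 * u) =
   s * u - s * u^2 + s^2 * u^2 + d * (2 * s * u + 1 - u) + d^2"
  unfolding tB_def by (simp add: field_simps) algebra

lemma vB_poly: "s \<noteq> 0 \<Longrightarrow> u \<noteq> 0 \<Longrightarrow> vB s u d * (u^2 * s) =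
   u * s - s^2 * u + s^2 * u^2 + d * (2 * u * s + 1 - s) + d^2"
  unfolding vB_def by (simp add: field_simps) algebra

definition B2 :: "complex \<Rightarrow> complex \<Rightarrow> complex" where "B2 s u = 2 - s - u + 2 * s * u"
definition B1 :: "complex \<Rightarrow> complex \<Rightarrow> complex" where
  "B1 s u = 1 - s - u + 4 * s * u - s^2 * u - s * u^2 + s^2 * u^2"
definition B0 :: "complex \<Rightarrow> complex \<Rightarrow> complex" where "B0 s u = s * u * (s - 1) * (u - 1)"

lemma Cbar_expand: "Cbar_eq s u d = d^3 + B2 s u * d^2 + B1 s u * d + B0 s u"
  unfolding Cbar_eq_def B2_def B1_def B0_def by (simp add: algebra_simps)

lemma tB_nz:
  assumes "s \<noteq> 0" "u \<noteq> 0" "Cbar_eq s u d = 0"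
  shows "tB s u d \<noteq> 0"
proof -
  have "tB s u d * (s^2 * u) * (1 + 2 * d + d^2 - s - s * d + s * u + s * u * d)
     = s^2 * u^2 + (1 + d + s * u) * Cbar_eq s u d"
    unfolding tB_poly[OF assms(1,2)] Cbar_eq_def
    by (simp add: algebra_simps power2_eq_square power3_eq_cube)
  then show ?thesis using assms by auto
qed

lemma vB_nz:
  assumes "s \<noteq> 0" "u \<noteq> 0" "Cbar_eq s u d = 0"
  shows "vB s u d \<noteq> 0"
proof -
  have "vB s u d * (u^2 * s) * (1 + 2 * d + d^2 - u - u * d + s * u + s * u * d)
     = s^2 * u^2 + (1 + d + s * u) * Cbar_eq s u d"
    unfolding vB_poly[OF assms(1,2)] Cbar_eq_def
    by (simp add: algebra_simps power2_eq_square power3_eq_cube)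
  then show ?thesis using assms by auto
qed

lemma Cbar_path:
  assumes x: "x \<in> Cbar"
  shows "\<exists>P. (P \<longlongrightarrow> x) (at (0::complex)) \<and>
     eventually (\<lambda>z. P z \<in> Cbar \<and> P z $ 1 - P z $ 2 \<noteq> 0) (at 0)"
proof -
  define s0 where "s0 = x$1"
  define u0 where "u0 = x$2"
  define c0 where "c0 = x$3"
  have s0: "s0 \<noteq> 0" and u0: "u0 \<noteq> 0" and r0: "Cbar_eq s0 u0 c0 = 0"
    using x unfolding Cbar_def s0_def u0_def c0_def by auto
  have lim_s: "((\<lambda>z. s0 + z) \<longlongrightarrow> s0) (at 0)"
    using tendsto_add[OF tendsto_const[of s0] tendsto_ident_at[of 0 UNIV]] by simp
  have "\<exists>R. (R \<longlongrightarrow> c0) (at 0) \<and> (\<forall>z. R z^3 + B2 (s0+z) u0 * R z^2 + B1 (s0+z) u0 * R z + B0 (s0+z) u0 = 0)"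
  proof (rule root_path)
    show "((\<lambda>z. B2 (s0+z) u0) \<longlongrightarrow> B2 s0 u0) (at 0)"
      unfolding B2_def by (intro tendsto_intros lim_s)
    show "((\<lambda>z. B1 (s0+z) u0) \<longlongrightarrow> B1 s0 u0) (at 0)"
      unfolding B1_def by (intro tendsto_intros lim_s)
    show "((\<lambda>z. B0 (s0+z) u0) \<longlongrightarrow> B0 s0 u0) (at 0)"
      unfolding B0_def by (intro tendsto_intros lim_s)
    show "c0^3 + B2 s0 u0 * c0^2 + B1 s0 u0 * c0 + B0 s0 u0 = 0"
      using r0 by (simp add: Cbar_expand)
  qed
  then obtain R where R: "(R \<longlongrightarrow> c0) (at 0)"
    "\<And>z. R z^3 + B2 (s0+z) u0 * R z^2 + B1 (s0+z) u0 * R z + B0 (s0+z) u0 = 0" by blast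
  define P where "P z = (vector [s0 + z, u0, R z] :: complex^3)" for z
  have "(P \<longlongrightarrow> x) (at 0)"
  proof (rule vec_tendstoI)
    fix i :: 3
    consider "i = 1" | "i = 2" | "i = 3" using exhaust_3 by blast
    then show "((\<lambda>z. P z $ i) \<longlongrightarrow> x $ i) (at 0)"
      by cases (auto simp: P_def s0_def [symmetric] u0_def [symmetric] c0_def [symmetric] lim_s R(1))
  qed
  moreover have "eventually (\<lambda>z. P z \<in> Cbar \<and> P z $ 1 - P z $ 2 \<noteq> 0) (at 0)"
    using ev_neq[of "-s0"] ev_neq[of "u0 - s0"]
  proof eventually_elim
    case (elim z)
    have "s0 + z \<noteq> 0" using elim(1) by (auto simp: add_eq_0_iff)
    moreover have "Cbar_eq (s0+z) u0 (R z) = 0" using R(2)[of z] by (simp add: Cbar_expand)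
    moreover have "s0 + z - u0 \<noteq> 0" using elim(2) by algebra
    ultimately show ?case using u0 by (simp add: P_def Cbar_def)
  qed
  ultimately show ?thesis by blast
qed

definition DvB :: "complex^4 \<Rightarrow> complex" where "DvB y = y$1 - y$3"
definition NB :: "complex^4 \<Rightarrow> complex" where
  "NB y = y$1 * y$3 * (y$2 * y$1 - y$4 * y$3 - DvB y)"
definition gB :: "complex^4 \<Rightarrow> complex^3" where
  "gB y = vector [y$1, y$3, NB y / DvB y]"
definition P1B :: "complex^4 \<Rightarrow> complex" where
  "P1B y = (let s = y$1; t = y$2; u = y$3; v = y$4; D = DvB y; N = NB y in
     D^2 * (t * s^2 * u - (s * u - s * u^2 + s^2 * u^2)) - N * D * (2 * s * u + 1 - u) - N^2)"
definition P2B :: "complex^4 \<Rightarrow> complex" where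
  "P2B y = (let s = y$1; t = y$2; u = y$3; v = y$4; D = DvB y; N = NB y in
     D^2 * (v * u^2 * s - (u * s - s^2 * u + s^2 * u^2)) - N * D * (2 * u * s + 1 - s) - N^2)"
definition P3B :: "complex^4 \<Rightarrow> complex" where
  "P3B y = (let s = y$1; t = y$2; u = y$3; v = y$4; D = DvB y; N = NB y in
     D^3 * (s * u * (s - 1) * (u - 1)) + N * D^2 * (1 - s - u + 4 * s * u - s^2 * u - s * u^2 + s^2 * u^2)
   + N^2 * D * (2 - s - u + 2 * s * u) + N^3)"

lemma polyfun_DvB: "polyfun DvB" unfolding DvB_def by (intro polyfun_rules)
lemma polyfun_NB: "polyfun NB" unfolding NB_def DvB_def by (intro polyfun_rules)
lemma polyfun_P1B: "polyfun P1B" unfolding P1B_def NB_def DvB_def Let_def by (intro polyfun_rules)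
lemma polyfun_P2B: "polyfun P2B" unfolding P2B_def NB_def DvB_def Let_def by (intro polyfun_rules)
lemma polyfun_P3B: "polyfun P3B" unfolding P3B_def NB_def DvB_def Let_def by (intro polyfun_rules)

lemma NB_e:
  assumes "p$1 \<noteq> 0" "p$2 \<noteq> 0"
  shows "NB (ebar_map p) = p$3 * DvB (ebar_map p)"
  using assms unfolding NB_def DvB_def ebar_map_simps tB_def vB_def
  by (simp add: field_simps) algebra

lemma PB_e_vanish:
  assumes "p \<in> Cbar"
  shows "P1B (ebar_map p) = 0" "P2B (ebar_map p) = 0" "P3B (ebar_map p) = 0"
proof -
  define s u c where "s = p$1" and "u = p$2" and "c = p$3"
  have nz: "s \<noteq> 0" "u \<noteq> 0" and ce: "Cbar_eq s u c = 0" using assms unfolding Cbar_def s_def u_def c_def by auto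
  have N: "NB (ebar_map p) = c * (s - u)"
    using NB_e[of p] nz unfolding s_def u_def c_def DvB_def ebar_map_simps by simp
  have D: "DvB (ebar_map p) = s - u" unfolding DvB_def ebar_map_simps s_def u_def ..
  have T: "tB s u c * s^2 * u = s * u - s * u^2 + s^2 * u^2 + c * (2 * s * u + 1 - u) + c^2"
    using tB_poly[OF nz, of c] by (simp add: mult.assoc)
  have V: "vB s u c * u^2 * s = u * s - s^2 * u + s^2 * u^2 + c * (2 * u * s + 1 - s) + c^2"
    using vB_poly[OF nz, of c] by (simp add: mult.assoc)
  show "P1B (ebar_map p) = 0"
    unfolding P1B_def Let_def N D ebar_map_simps s_def[symmetric] u_def[symmetric] c_def[symmetric] T
    by (simp add: algebra_simps power2_eq_square power3_eq_cube)
  show "P2B (ebar_map p) = 0"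
    unfolding P2B_def Let_def N D ebar_map_simps s_def[symmetric] u_def[symmetric] c_def[symmetric] V
    by (simp add: algebra_simps power2_eq_square power3_eq_cube)
  have "P3B (ebar_map p) = (s - u)^3 * Cbar_eq s u c"
    unfolding P3B_def Let_def N D ebar_map_simps s_def[symmetric] u_def[symmetric] c_def[symmetric] Cbar_eq_def
    by (simp add: algebra_simps power2_eq_square power3_eq_cube)
  then show "P3B (ebar_map p) = 0" using ce by simp
qed

lemma E0bar_inv:
  assumes y: "y \<in> zariski_closure (ebar_map ` Cbar) \<inter> torus4" and D: "DvB y \<noteq> 0"
  shows "gB y \<in> Cbar \<and> gB y $ 1 - gB y $ 2 \<noteq> 0 \<and> ebar_map (gB y) = y"
proof -
  have yc: "y \<in> zariski_closure (ebar_map ` Cbar)" and yt: "y \<in> torus4" using y by auto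
  have p1: "P1B y = 0" by (rule zc_vanish[OF polyfun_P1B _ yc]) (auto simp: PB_e_vanish)
  have p2: "P2B y = 0" by (rule zc_vanish[OF polyfun_P2B _ yc]) (auto simp: PB_e_vanish)
  have p3: "P3B y = 0" by (rule zc_vanish[OF polyfun_P3B _ yc]) (auto simp: PB_e_vanish)
  define s t u v where "s = y$1" and "t = y$2" and "u = y$3" and "v = y$4"
  define c where "c = NB y / DvB y"
  have nz: "s \<noteq> 0" "u \<noteq> 0" using yt unfolding torus4_def s_def u_def by auto
  have Dd: "DvB y = s - u" unfolding DvB_def s_def u_def ..
  have N: "NB y = c * (s - u)" using D unfolding c_def Dd by simp
  have D2: "s - u \<noteq> 0" using D Dd by simp
  have "(s - u)^2 * (t * s^2 * u - (s * u - s * u^2 + s^2 * u^2 + c * (2 * s * u + 1 - u) + c^2)) = 0"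
    using p1 unfolding P1B_def Let_def N Dd s_def[symmetric] t_def[symmetric] u_def[symmetric]
    by (simp add: algebra_simps power2_eq_square power3_eq_cube)
  then have "t * s^2 * u = tB s u c * s^2 * u"
    using D2 tB_poly[OF nz, of c] by (simp add: mult.assoc)
  then have tt: "tB s u c = t" using nz by simp
  have "(s - u)^2 * (v * u^2 * s - (u * s - s^2 * u + s^2 * u^2 + c * (2 * u * s + 1 - s) + c^2)) = 0"
    using p2 unfolding P2B_def Let_def N Dd s_def[symmetric] v_def[symmetric] u_def[symmetric]
    by (simp add: algebra_simps power2_eq_square power3_eq_cube)
  then have "v * u^2 * s = vB s u c * u^2 * s"
    using D2 vB_poly[OF nz, of c] by (simp add: mult.assoc)
  then have vv: "vB s u c = v" using nz by simp
  have "(s - u)^3 * Cbar_eq s u c = 0"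
    using p3 unfolding P3B_def Let_def N Dd s_def[symmetric] u_def[symmetric] Cbar_eq_def
    by (simp add: algebra_simps power2_eq_square power3_eq_cube)
  then have ce: "Cbar_eq s u c = 0" using D2 by simp
  have g: "gB y = vector [s, u, c]" unfolding gB_def s_def u_def c_def ..
  have "ebar_map (gB y) = y"
  proof (rule vec_eq_iff[THEN iffD2], rule allI)
    fix i :: 4
    consider "i = 1" | "i = 2" | "i = 3" | "i = 4" using exhaust_4 by blast
    then show "ebar_map (gB y) $ i = y $ i"
      by cases (simp_all add: g ebar_map_simps tt vv, simp_all add: s_def t_def u_def v_def)
  qed
  then show ?thesis using nz ce D2 by (simp add: g Cbar_def)
qed

lemma rational_ebar_map: "rational_on ebar_map (Cbar - {x. x$1 - x$2 = 0})"
proof -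
  define P :: "4 \<Rightarrow> complex^3 \<Rightarrow> complex" where "P i = (if i = 1 then (\<lambda>p. p$1) else if i = 2 then
     (\<lambda>p. p$1 * p$2 - p$1 * p$2^2 + p$1^2 * p$2^2 + p$3 * (2 * p$1 * p$2 + 1 - p$2) + p$3^2)
     else if i = 3 then (\<lambda>p. p$2) else
     (\<lambda>p. p$2 * p$1 - p$1^2 * p$2 + p$1^2 * p$2^2 + p$3 * (2 * p$2 * p$1 + 1 - p$1) + p$3^2))" for i
  define Q :: "4 \<Rightarrow> complex^3 \<Rightarrow> complex" where "Q i = (if i = 2 then (\<lambda>p. p$1^2 * p$2) else if i = 4 then
     (\<lambda>p. p$2^2 * p$1) else (\<lambda>p. 1))" for i
  have pf: "\<forall>i. polyfun (P i) \<and> polyfun (Q i)"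
  proof
    fix i :: 4
    show "polyfun (P i) \<and> polyfun (Q i)" unfolding P_def Q_def by (auto intro!: polyfun_rules polyfun_rules)
  qed
  have "Q i x \<noteq> 0 \<and> ebar_map x $ i = P i x / Q i x" if x: "x \<in> Cbar - {x. x$1 - x$2 = 0}" for x i
  proof -
  from x have nz: "x$1 \<noteq> 0" "x$2 \<noteq> 0" unfolding Cbar_def by auto
  consider "i = 1" | "i = 2" | "i = 3" | "i = 4" using exhaust_4 by blast
  then show "Q i x \<noteq> 0 \<and> ebar_map x $ i = P i x / Q i x"
  proof cases
    case 2 then show ?thesis using nz tB_poly[OF nz, of "x$3"]
      by (simp add: P_def Q_def ebar_map_simps eq_divide_eq)
  next
    case 4 then show ?thesis using nz vB_poly[OF nz, of "x$3"]
      by (simp add: P_def Q_def ebar_map_simps eq_divide_eq)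
  qed (simp_all add: P_def Q_def ebar_map_simps)
  qed
  then show ?thesis unfolding rational_on_def using pf by blast
qed

lemma rational_gB: "rational_on gB (Y - {y. DvB y = 0})"
proof -
  define P :: "3 \<Rightarrow> complex^4 \<Rightarrow> complex" where "P i = (if i = 1 then (\<lambda>y. y$1) else if i = 2 then
     (\<lambda>y. y$3) else NB)" for i
  define Q :: "3 \<Rightarrow> complex^4 \<Rightarrow> complex" where "Q i = (if i = 3 then DvB else (\<lambda>p. 1))" for i
  have pf: "\<forall>i. polyfun (P i) \<and> polyfun (Q i)"
  proof
    fix i :: 3
    show "polyfun (P i) \<and> polyfun (Q i)" unfolding P_def Q_def by (auto intro!: polyfun_rules polyfun_NB polyfun_rules polyfun_DvB)
  qed
  have "Q i x \<noteq> 0 \<and> gB x $ i = P i x / Q i x" if x: "x \<in> Y - {y. DvB y = 0}" for x i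
  proof -
  consider "i = 1" | "i = 2" | "i = 3" using exhaust_3 by blast
  then show "Q i x \<noteq> 0 \<and> gB x $ i = P i x / Q i x"
    by cases (use x in \<open>simp_all add: P_def Q_def gB_def\<close>)
  qed
  then show ?thesis unfolding rational_on_def using pf by blast
qed

lemma isCont_ebar_map: "x$1 \<noteq> 0 \<Longrightarrow> x$2 \<noteq> 0 \<Longrightarrow> isCont ebar_map x"
  unfolding isCont_def
proof (rule vec_tendstoI)
  fix i :: 4
  assume nz: "x$1 \<noteq> 0" "x$2 \<noteq> 0"
  have l: "((\<lambda>y. y $ j) \<longlongrightarrow> x $ j) (at x)" for j
    by (intro tendsto_vec_nth tendsto_ident_at)
  consider "i = 1" | "i = 2" | "i = 3" | "i = 4" using exhaust_4 by blast
  then show "((\<lambda>y. ebar_map y $ i) \<longlongrightarrow> ebar_map x $ i) (at x)"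
    by cases (simp_all add: ebar_map_simps tB_def vB_def l, (intro tendsto_intros l; use nz in simp)+)
qed

lemma ebar_torus: "x \<in> Cbar \<Longrightarrow> ebar_map x \<in> torus4"
  unfolding torus4_def
proof (clarify)
  fix i :: 4 assume x: "x \<in> Cbar" and z: "ebar_map x $ i = 0"
  then have nz: "x$1 \<noteq> 0" "x$2 \<noteq> 0" "Cbar_eq (x$1) (x$2) (x$3) = 0" unfolding Cbar_def by auto
  consider "i = 1" | "i = 2" | "i = 3" | "i = 4" using exhaust_4 by blast
  then show False
    by cases (use z nz tB_nz[OF nz] vB_nz[OF nz] in \<open>simp_all add: ebar_map_simps\<close>)
qed

lemma second_half: "birationally_equivalent Cbar E0bar"
  unfolding E0bar_def
proof (rule birat_generic[where Du = "\<lambda>p. p$1 - p$2" and Dv = DvB and g = gB])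
  show "polyfun (\<lambda>p::complex^3. p$1 - p$2)" by (intro polyfun_rules)
  show "polyfun DvB" by (rule polyfun_DvB)
  show "\<And>x. x \<in> Cbar \<Longrightarrow> \<exists>P. (P \<longlongrightarrow> x) (at (0::complex)) \<and> eventually (\<lambda>z. P z \<in> Cbar \<and> P z $ 1 - P z $ 2 \<noteq> 0) (at 0)"
    by (rule Cbar_path)
  show "\<And>x. x \<in> Cbar \<Longrightarrow> isCont ebar_map x" by (rule isCont_ebar_map) (auto simp: Cbar_def)
  show "rational_on ebar_map (Cbar - {x. x$1 - x$2 = 0})" by (rule rational_ebar_map)
  show "rational_on gB (zariski_closure (ebar_map ` Cbar) \<inter> torus4 - {y. DvB y = 0})" by (rule rational_gB)
  show "\<And>x. x \<in> Cbar \<Longrightarrow> ebar_map x \<in> torus4" by (rule ebar_torus)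
  show "\<And>x. x \<in> Cbar \<Longrightarrow> x$1 - x$2 \<noteq> 0 \<Longrightarrow> DvB (ebar_map x) \<noteq> 0"
    by (simp add: DvB_def ebar_map_simps)
  show "\<And>x. x \<in> Cbar \<Longrightarrow> x$1 - x$2 \<noteq> 0 \<Longrightarrow> gB (ebar_map x) = x"
  proof -
    fix x assume x: "x \<in> Cbar" and D: "x$1 - x$2 \<noteq> 0"
    then have nz: "x$1 \<noteq> 0" "x$2 \<noteq> 0" unfolding Cbar_def by auto
    have "DvB (ebar_map x) \<noteq> 0" using D by (simp add: DvB_def ebar_map_simps)
    then have "NB (ebar_map x) / DvB (ebar_map x) = x$3" using NB_e[OF nz] by simp
    then show "gB (ebar_map x) = x"
      unfolding gB_def vec_eq_iff forall_3 by (simp add: ebar_map_simps)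
  qed
  show "\<And>y. y \<in> zariski_closure (ebar_map ` Cbar) \<inter> torus4 \<Longrightarrow> DvB y \<noteq> 0 \<Longrightarrow>
      gB y \<in> Cbar \<and> gB y $ 1 - gB y $ 2 \<noteq> 0 \<and> ebar_map (gB y) = y"
    by (rule E0bar_inv)
qed



theorem mainTheorem7:
  shows "birationally_equivalent Cfrak E0 \<and> birationally_equivalent Cbar E0bar"
  using first_half second_half by blast

end
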